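(* Fix a positive integer $s$ and let $h_{i,j}=h_{s,i,j}$ and $H_i(x)=\sum_{j\ge i+1}h_{s,i,j}x^j$ be as in the context. Then for $i>1$, $$H_i=-\Big(\frac{sx}{i}-1\Big)H_{i-1}+\frac{x(x-1)}{i}H_{i-1}',$$ where $H'$ denotes the derivative with respect to $x$ (as formal power series).
   Context: For a fixed positive integer $s$, the numbers $h_{s,i,j}$ (integers $i\ge 0$, $j$) are defined recursively by: $h_{s,i,j}=0$ if $j\le i$; for $i=0$ and $j\ge 1$, $h_{s,0,j}=\binom{s+j-1}{j}\frac{s-j}{s}$; for $i>0$ and $j>i$, $h_{s,i,j}=-\frac{s-j+1}{i}h_{s,i-1,j-1}-\frac{j-i}{i}h_{s,i-1,j}$. $H_i(x)=\sum_{j\ge i+1}h_{s,i,j}x^j$ is the ordinary generating function, a formal power series in $x$. *)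

theory Defs
  imports "HOL-Computational_Algebra.Formal_Power_Series"
begin

text \<open>h s i j, for a fixed positive integer s. The index j ranges over integers in the
paper, but h vanishes for j \<le> i (with i \<ge> 0), so natural-number j loses nothing.\<close>
fun h :: "nat \<Rightarrow> nat \<Rightarrow> nat \<Rightarrow> real" where
  "h s 0 j = (if j \<le> 0 then 0
              else of_nat ((s + j - 1) choose j) * (of_int (int s - int j) / of_nat s))"
| "h s (Suc i) j = (if j \<le> Suc i then 0
              else - (of_int (int s - int j + 1) / of_nat (Suc i)) * h s i (j - 1)
                   - (of_nat (j - Suc i) / of_nat (Suc i)) * h s i j)"

definition H :: "nat \<Rightarrow> nat \<Rightarrow> real fps" where
  "H s i = Abs_fps (\<lambda>j. if j \<ge> i + 1 then h s i j else 0)"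

end

theory Submission
  imports Defs
begin

lemma X: "- (((s::real) - m) / d) * a - ((m - k) / d) * b = b - s / d * a + 1 / d * (m * a) - 1 / d * ((m+1) * b)" if "d = k + 1" "d > 0"
proof -
  have 1: "d * (- (((s::real) - m) / d) * a - ((m - k) / d) * b) = -(s-m)*a - (m-k)*b"
    using that(2) by (simp add: field_simps)
  have 2: "d * (b - s / d * a + 1 / d * (m * a) - 1 / d * ((m+1) * b)) = d*b - s*a + m*a - (m+1)*b"
    using that(2) by (simp add: field_simps)
  have "-(s-m)*a - (m-k)*b = d*b - s*a + m*a - (m+1)*b" using that(1) by (simp add: algebra_simps)
  with 1 2 have "d * (- (((s::real) - m) / d) * a - ((m - k) / d) * b) = d * (b - s / d * a + 1 / d * (m * a) - 1 / d * ((m+1) * b))" by simp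
  then show ?thesis using that(2) by simp
qed

lemma h_zero: "j \<le> i \<Longrightarrow> h s i j = 0"
  by (cases i) auto

lemma H_eq: "H s i = Abs_fps (h s i)"
  unfolding H_def by (rule fps_ext) (auto simp: h_zero)

theorem lemma2:
  fixes s i :: nat
  assumes "s > 0" and "i > 1"
  shows "H s i = - (fps_const (of_nat s / of_nat i) * fps_X - 1) * H s (i - 1)
                 + fps_const (1 / of_nat i) * (fps_X * (fps_X - 1)) * fps_deriv (H s (i - 1))"
proof -
  obtain k where k: "i = Suc k" "k \<ge> 1" using assms by (cases i) auto
  let ?c = "h s k"
  have e: "- (fps_const (of_nat s / of_nat i) * fps_X - 1) * H s (i - 1)
                 + fps_const (1 / of_nat i) * (fps_X * (fps_X - 1)) * fps_deriv (H s (i - 1))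
        = H s k - fps_const (of_nat s / of_nat i) * (fps_X * H s k)
          + fps_const (1 / of_nat i) * (fps_X * (fps_X * fps_deriv (H s k)))
          - fps_const (1 / of_nat i) * (fps_X * fps_deriv (H s k))"
    using k by (simp add: algebra_simps)
  show ?thesis
    unfolding e
  proof (rule fps_ext)
    fix n
    show "fps_nth (H s i) n = fps_nth (H s k - fps_const (of_nat s / of_nat i) * (fps_X * H s k)
          + fps_const (1 / of_nat i) * (fps_X * (fps_X * fps_deriv (H s k)))
          - fps_const (1 / of_nat i) * (fps_X * fps_deriv (H s k))) n"
    proof (cases n)
      case 0
      then show ?thesis using k by (simp add: H_eq h_zero fps_X_mult_nth)
    next
      case (Suc m)
      show ?thesis
      proof (cases "n \<le> i")
        case True
        have "h s k m = 0" using True Suc k by (intro h_zero) auto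
        moreover have "n < i \<Longrightarrow> h s k n = 0" using k by (intro h_zero) auto
        ultimately show ?thesis using True Suc k
          by (cases "n = i") (auto simp: H_eq h_zero fps_X_mult_nth field_simps)
      next
        case False
        have L: "fps_nth (H s i) n = - ((real s - real m) / real (Suc k)) * h s k m
                 - ((real m - real k) / real (Suc k)) * h s k (Suc m)"
          using False Suc k by (simp add: H_eq of_nat_diff)
        have R: "fps_nth (H s k - fps_const (of_nat s / of_nat i) * (fps_X * H s k)
          + fps_const (1 / of_nat i) * (fps_X * (fps_X * fps_deriv (H s k)))
          - fps_const (1 / of_nat i) * (fps_X * fps_deriv (H s k))) n
          = h s k (Suc m) - real s / real (Suc k) * h s k m
            + 1 / real (Suc k) * (real m * h s k m) - 1 / real (Suc k) * (real (Suc m) * h s k (Suc m))"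
          using Suc k by (cases m) (simp_all add: H_eq fps_X_mult_nth)
        show ?thesis unfolding L R using X[where d="real (Suc k)" and k="real k" and s="real s" and m="real m" and a="h s k m" and b="h s k (Suc m)"] by simp
      qed
    qed
  qed
qed

end
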